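(* Let $\mathbb{X}$ be a two-dimensional smooth real Banach space and $\mathbb{H}$ a real Hilbert space (of dimension at least $2$). Let $T\in\mathbb{L}(\mathbb{X},\mathbb{H})$ be of rank one with $\|T\|=1$, and suppose $M_T=\{\pm x\}$. Then $T$ is an extreme contraction if and only if $(x,Tx)$ is not a CPP.
   Context: $M_T=\{x\in S_{\mathbb{X}}:\|Tx\|=\|T\|\}$. A norm one $T$ is an extreme contraction if it is an extreme point of the closed unit ball of $\mathbb{L}(\mathbb{X},\mathbb{H})$. $B(x,r)=\{u:\|u-x\|<r\}$. $x\perp_B y$ means $\|x+\lambda y\|\ge\|x\|$ for all real $\lambda$; $x^\perp=\{y:x\perp_By\}$. For $x\in S_{\mathbb{X}}$, $y\in S_{\mathbb{H}}$, $(x,y)$ is a CPP if there exist $r>0,\mu>0$ such that for all $z\in x^\perp\cap S_{\mathbb{X}}$, all $w\in y^\perp\cap S_{\mathbb{H}}$ and all $a,b\in\mathbb{R}$, $ax+bz\in B(x,r)\cap S_{\mathbb{X}}$ implies $\|ay+b\mu w\|\le1$. *)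

theory Defs
  imports "HOL-Analysis.Analysis"
begin

definition smooth_space :: "'a::real_normed_vector itself \<Rightarrow> bool" where
  "smooth_space _ \<longleftrightarrow>
     (\<forall>x::'a. norm x = 1 \<longrightarrow> (\<exists>!f::'a \<Rightarrow>\<^sub>L real. norm f = 1 \<and> blinfun_apply f x = 1))"

definition norm_attain :: "('a::real_normed_vector \<Rightarrow>\<^sub>L 'b::real_normed_vector) \<Rightarrow> 'a set" where
  "norm_attain T = {x. norm x = 1 \<and> norm (blinfun_apply T x) = norm T}"

definition bj_orth :: "'a::real_normed_vector \<Rightarrow> 'a \<Rightarrow> bool" where
  "bj_orth x y \<longleftrightarrow> (\<forall>t::real. norm (x + t *\<^sub>R y) \<ge> norm x)"

definition extreme_contraction :: "('a::real_normed_vector \<Rightarrow>\<^sub>L 'b::real_normed_vector) \<Rightarrow> bool" where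
  "extreme_contraction T \<longleftrightarrow> norm T = 1 \<and> T extreme_point_of cball 0 1"

definition cpp :: "'a::real_normed_vector \<Rightarrow> 'b::real_normed_vector \<Rightarrow> bool" where
  "cpp x y \<longleftrightarrow> norm x = 1 \<and> norm y = 1 \<and>
     (\<exists>r>0. \<exists>\<mu>>0. \<forall>z w. \<forall>a b::real.
        (bj_orth x z \<and> norm z = 1 \<and> bj_orth y w \<and> norm w = 1 \<and>
         a *\<^sub>R x + b *\<^sub>R z \<in> ball x r \<and> norm (a *\<^sub>R x + b *\<^sub>R z) = 1)
        \<longrightarrow> norm (a *\<^sub>R y + (b * \<mu>) *\<^sub>R w) \<le> 1)"

end

theory Submission
  imports Defs
begin

lemma sq_expand:
  fixes y w :: "'b::real_inner"
  shows "(norm (y + t *\<^sub>R w))\<^sup>2 = (norm y)\<^sup>2 + 2 * t * inner y w + t\<^sup>2 * (norm w)\<^sup>2"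
proof -
  have "inner y (t *\<^sub>R w) = t * inner y w" by simp
  moreover have "(norm (t *\<^sub>R w))\<^sup>2 = t\<^sup>2 * (norm w)\<^sup>2" by (simp add: power_mult_distrib)
  ultimately show ?thesis using dot_norm[of y "t *\<^sub>R w"] by simp
qed

lemma bj_inner:
  fixes y w :: "'b::real_inner"
  assumes "bj_orth y w"
  shows "inner y w = 0"
proof (cases "w = 0")
  case True thus ?thesis by simp
next
  case False
  define t where "t = - inner y w / (norm w)\<^sup>2"
  have nw: "(norm w)\<^sup>2 > 0" using False by simp
  have "norm y \<le> norm (y + t *\<^sub>R w)" using assms unfolding bj_orth_def by blast
  hence "(norm y)\<^sup>2 \<le> (norm (y + t *\<^sub>R w))\<^sup>2" by (simp add: power_mono)
  hence A: "(norm y)\<^sup>2 \<le> (norm y)\<^sup>2 + 2 * t * inner y w + t\<^sup>2 * (norm w)\<^sup>2" using sq_expand[of y t w] by linarith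
  have B: "2 * t * inner y w + t\<^sup>2 * (norm w)\<^sup>2 = - (inner y w)\<^sup>2 / (norm w)\<^sup>2"
    unfolding t_def using nw by (simp add: field_simps power2_eq_square)
  from A B have "(inner y w)\<^sup>2 / (norm w)\<^sup>2 \<le> 0" by linarith
  hence "(inner y w)\<^sup>2 \<le> 0" using nw by (simp add: divide_le_0_iff)
  thus ?thesis by simp
qed

lemma inner_bj:
  fixes y w :: "'b::real_inner"
  assumes "inner y w = 0"
  shows "bj_orth y w"
  unfolding bj_orth_def
proof
  fix t :: real
  have e1: "2 * t * inner y w = 0" using assms by simp
  have e2: "0 \<le> t\<^sup>2 * (norm w)\<^sup>2" by simp
  have "(norm y)\<^sup>2 \<le> (norm (y + t *\<^sub>R w))\<^sup>2" using sq_expand[of y t w] e1 e2 by linarith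
  thus "norm y \<le> norm (y + t *\<^sub>R w)" using power2_le_imp_le norm_ge_zero by blast
qed

lemma pyth2:
  fixes y w :: "'b::real_inner"
  assumes "inner y w = 0" "norm y = 1" "norm w = 1"
  shows "(norm (a *\<^sub>R y + b *\<^sub>R w))\<^sup>2 = a\<^sup>2 + b\<^sup>2"
proof -
  have "(norm (a *\<^sub>R y + b *\<^sub>R w))\<^sup>2 = (norm (a *\<^sub>R y))\<^sup>2 + (norm (b *\<^sub>R w))\<^sup>2"
    by (rule norm_add_Pythagorean) (simp add: orthogonal_def assms)
  thus ?thesis using assms by (simp add: power_mult_distrib)
qed

lemma paral:
  fixes p q :: "'b::real_inner"
  assumes "norm (p + q) \<le> c" "norm (p - q) \<le> c"
  shows "(norm p)\<^sup>2 + (norm q)\<^sup>2 \<le> c\<^sup>2"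
proof -
  have c0: "0 \<le> c" using assms(1) norm_ge_zero order_trans by blast
  have "(norm (p + q))\<^sup>2 + (norm (p - q))\<^sup>2 = 2 * (norm p)\<^sup>2 + 2 * (norm q)\<^sup>2"
    using dot_norm[of p q] dot_norm_neg[of p q] by simp
  moreover have "(norm (p + q))\<^sup>2 \<le> c\<^sup>2" "(norm (p - q))\<^sup>2 \<le> c\<^sup>2"
    using assms by (auto intro: power_mono)
  ultimately show ?thesis by simp
qed



lemma prelim:
  fixes T :: "'a::banach \<Rightarrow>\<^sub>L 'b::{real_inner, complete_space}"
    and x :: 'a
  assumes dimA: "dim (UNIV :: 'a set) = 2"
    and rk: "dim (range (blinfun_apply T)) = 1"
    and nT: "norm T = 1"
    and MT: "norm_attain T = {x, -x}"
  obtains f e h k where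
    "norm x = 1" "norm (T x) = 1"
    "\<And>u. blinfun_apply T u = f u *\<^sub>R T x"
    "bounded_linear f" "\<And>u. \<bar>f u\<bar> \<le> norm u" "f x = 1"
    "norm e = 1" "f e = 0"
    "\<And>u. u = f u *\<^sub>R x + h u *\<^sub>R e"
    "bounded_linear h" "k > 0" "\<And>u. k * norm (f u, h u) \<le> norm u"
    "\<And>w a b. w = a *\<^sub>R x + b *\<^sub>R e \<Longrightarrow> a = f w \<and> b = h w"
proof -
  have xin: "x \<in> norm_attain T" using MT by auto
  hence nx: "norm x = 1" and ny: "norm (T x) = 1" using nT by (auto simp: norm_attain_def)
  define y where "y = T x"
  obtain B where B: "B \<subseteq> range (blinfun_apply T)" "independent B"
     "range (blinfun_apply T) \<subseteq> span B" "card B = dim (range (blinfun_apply T))"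
    by (rule real_vector.basis_exists)
  have "card B = 1" using B(4) rk by simp
  then obtain b where Bb: "B = {b}" by (rule card_1_singletonE)
  have inb: "\<exists>k. T u = k *\<^sub>R b" for u
  proof -
    have "T u \<in> span {b}" using B(3) Bb by auto
    thus ?thesis by (auto simp: real_vector.span_singleton)
  qed
  have yb: "\<exists>k. y = k *\<^sub>R b" unfolding y_def by (rule inb)
  then obtain ky where ky: "y = ky *\<^sub>R b" by blast
  have "ky \<noteq> 0" using ky ny y_def by auto
  define f where "f u = inner (T u) y" for u
  have Tf: "T u = f u *\<^sub>R y" for u
  proof -
    obtain k where "T u = k *\<^sub>R b" using inb by blast
    hence "T u = (k / ky) *\<^sub>R y" using ky \<open>ky \<noteq> 0\<close> by simp
    moreover have "inner y y = 1" using ny y_def by (simp add: dot_square_norm)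
    ultimately show ?thesis unfolding f_def by (simp add: inner_commute)
  qed
  have flin: "bounded_linear f" unfolding f_def
    by (intro bounded_linear_compose[OF bounded_linear_inner_left] blinfun.bounded_linear_right)
  have fb: "\<bar>f u\<bar> \<le> norm u" for u
  proof -
    have "norm (T u) \<le> norm u" using norm_blinfun[of T u] nT by simp
    thus ?thesis using Tf[of u] ny y_def by simp
  qed
  have fx: "f x = 1" unfolding f_def y_def using ny by (simp add: dot_square_norm)
  interpret f: bounded_linear f by fact
  obtain v where v: "v \<notin> span {x}"
  proof -
    have "\<not> (UNIV \<subseteq> span {x})"
    proof
      assume "UNIV \<subseteq> span {x}"
      hence "dim (UNIV :: 'a set) \<le> card {x}" by (intro real_vector.dim_le_card) auto
      thus False using dimA by simp
    qed
    thus ?thesis using that by blast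
  qed
  define z1 where "z1 = v - f v *\<^sub>R x"
  have fz1: "f z1 = 0" unfolding z1_def by (simp add: f.diff f.scale fx)
  have "z1 \<noteq> 0" using v unfolding z1_def
    by (metis eq_iff_diff_eq_0 real_vector.span_base real_vector.span_scale singletonI)
  define z0 where "z0 = z1 /\<^sub>R norm z1"
  have nz0: "norm z0 = 1" using \<open>z1 \<noteq> 0\<close> unfolding z0_def by simp
  have fz0: "f z0 = 0" unfolding z0_def by (simp add: f.scale fz1)
  have z0nx: "z0 \<notin> span {x}"
  proof
    assume "z0 \<in> span {x}"
    then obtain k where "z0 = k *\<^sub>R x" by (auto simp: real_vector.span_singleton)
    hence "f z0 = k" using fx by (simp add: f.scale)
    thus False using fz0 \<open>z0 = k *\<^sub>R x\<close> nz0 by simp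
  qed
  have decomp: "\<exists>\<beta>. u = f u *\<^sub>R x + \<beta> *\<^sub>R z0" for u
  proof (rule ccontr)
    assume nex: "\<not> ?thesis"
    define u' where "u' = u - f u *\<^sub>R x"
    have fu': "f u' = 0" unfolding u'_def by (simp add: f.diff f.scale fx)
    have u'nz: "u' \<notin> span {z0}"
    proof
      assume "u' \<in> span {z0}"
      then obtain k where "u' = k *\<^sub>R z0" by (auto simp: real_vector.span_singleton)
      thus False using nex unfolding u'_def by (metis add.commute diff_add_cancel)
    qed
    have u'nxz: "u' \<notin> span {x, z0}"
    proof
      assume "u' \<in> span {x, z0}"
      then obtain k where k: "u' - k *\<^sub>R x \<in> span {z0}" using real_vector.span_breakdown_eq by blast
      have "f (u' - k *\<^sub>R x) = - k" by (simp add: f.diff f.scale fx fu')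
      moreover obtain j where "u' - k *\<^sub>R x = j *\<^sub>R z0" using k by (auto simp: real_vector.span_singleton)
      ultimately have "k = 0" by (simp add: f.scale fz0)
      thus False using k u'nz by simp
    qed
    have xnz: "x \<notin> span {z0}"
    proof
      assume "x \<in> span {z0}"
      then obtain k where "x = k *\<^sub>R z0" by (auto simp: real_vector.span_singleton)
      thus False using fx fz0 by (simp add: f.scale)
    qed
    have ind: "independent {u', x, z0}"
      using u'nxz xnz nz0 by (auto simp: real_vector.independent_insert)
    have d1: "u' \<noteq> x" "u' \<noteq> z0" "x \<noteq> z0"
      using u'nxz real_vector.span_base[of x "{x, z0}"] real_vector.span_base[of z0 "{x, z0}"] fx fz0 by auto
    hence c3: "card {u', x, z0} = 3" by simp
    obtain C where C0: "C \<subseteq> (UNIV :: 'a set)" "independent C" "UNIV \<subseteq> span C" "card C = dim (UNIV :: 'a set)"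
      by (rule real_vector.basis_exists)
    have C: "independent C" "UNIV \<subseteq> span C" "card C = 2" using C0 dimA by auto
    have "finite C" using C(3) card.infinite by fastforce
    have "card {u', x, z0} \<le> card C"
      using real_vector.independent_span_bound[of C "{u', x, z0}"] \<open>finite C\<close> ind C(2) by auto
    thus False using c3 C(3) by simp
  qed
  define h where "h u = (SOME \<beta>. u = f u *\<^sub>R x + \<beta> *\<^sub>R z0)" for u
  have hdec: "u = f u *\<^sub>R x + h u *\<^sub>R z0" for u
    unfolding h_def using someI_ex[OF decomp[of u]] .
  have uniq: "a = f w \<and> b = h w" if "w = a *\<^sub>R x + b *\<^sub>R z0" for w a b
  proof -
    have fa: "f w = a" using that by (simp add: f.add f.scale fx fz0)
    have e: "a *\<^sub>R x + b *\<^sub>R z0 = a *\<^sub>R x + h w *\<^sub>R z0" using that hdec[of w] fa by metis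
    have "(b - h w) *\<^sub>R z0 = 0" using e by (simp add: algebra_simps)
    thus ?thesis using fa nz0 by auto
  qed
  have hlin: "linear h"
  proof
    fix u w
    have "u + w = (f u *\<^sub>R x + h u *\<^sub>R z0) + (f w *\<^sub>R x + h w *\<^sub>R z0)"
      using hdec by metis
    also have "\<dots> = (f u + f w) *\<^sub>R x + (h u + h w) *\<^sub>R z0" by (simp add: algebra_simps)
    finally have "u + w = (f u + f w) *\<^sub>R x + (h u + h w) *\<^sub>R z0" .
    thus "h (u + w) = h u + h w" using uniq by metis
  next
    fix r u
    have "r *\<^sub>R u = (r * f u) *\<^sub>R x + (r * h u) *\<^sub>R z0"
      using hdec[of u] by (metis scaleR_add_right scaleR_scaleR)
    thus "h (r *\<^sub>R u) = r *\<^sub>R h u" using uniq by (metis real_scaleR_def)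
  qed
  define L where "L v = fst v *\<^sub>R x + snd v *\<^sub>R z0" for v :: "real \<times> real"
  have Lcont: "continuous_on UNIV L" unfolding L_def by (intro continuous_intros)
  have ne: "(1::real, 0::real) \<in> sphere 0 1" by (simp add: dist_norm)
  have cont: "continuous_on (sphere 0 1) (\<lambda>t. norm (L t))"
    by (rule continuous_on_subset[OF continuous_on_norm[OF Lcont] subset_UNIV])
  obtain s where s: "s \<in> sphere 0 1" "\<forall>t\<in>sphere 0 1. norm (L s) \<le> norm (L t)"
    using continuous_attains_inf[OF compact_sphere _ cont] ne by blast
  define c0 where "c0 = norm (L s)"
  have "L s \<noteq> 0"
  proof
    assume "L s = 0"
    hence "fst s = 0 \<and> snd s = 0" using uniq[of 0 "fst s" "snd s"] uniq[of 0 0 0] unfolding L_def by simp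
    hence "s = 0" by (simp add: prod_eq_iff)
    thus False using s(1) by simp
  qed
  hence c0pos: "c0 > 0" unfolding c0_def by simp
  have Lb: "c0 * norm v \<le> norm (L v)" for v
  proof (cases "v = 0")
    case True thus ?thesis by simp
  next
    case False
    have "c0 \<le> norm (L (v /\<^sub>R norm v))" using s(2) False unfolding c0_def by simp
    also have "L (v /\<^sub>R norm v) = L v /\<^sub>R norm v" unfolding L_def by (simp add: algebra_simps)
    finally show ?thesis using False by (simp add: field_simps)
  qed
  have cb: "c0 * norm (f u, h u) \<le> norm u" for u
  proof -
    have "L (f u, h u) = u" unfolding L_def fst_conv snd_conv by (rule hdec[symmetric])
    thus ?thesis using Lb[of "(f u, h u)"] by simp
  qed
  have hbl: "bounded_linear h"
  proof (rule bounded_linear_intro[where K="1/c0"])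
    fix u w show "h (u + w) = h u + h w" using hlin by (simp add: linear_add)
  next
    fix r u show "h (r *\<^sub>R u) = r *\<^sub>R h u" using hlin by (simp add: linear_scale)
  next
    fix u
    have "c0 * norm (h u) \<le> c0 * norm (f u, h u)"
      using c0pos norm_snd_le[of "h u" "f u"] by (intro mult_left_mono) auto
    also have "\<dots> \<le> norm u" by fact
    finally show "norm (h u) \<le> norm u * (1 / c0)" using c0pos by (simp add: field_simps)
  qed
  have Tf': "\<And>u. T u = f u *\<^sub>R T x" using Tf unfolding y_def .
  show thesis
    by (rule that[where f=f and h=h and e=z0 and k=c0])
      (fact nx ny Tf' flin fb fx nz0 fz0 hdec hbl c0pos cb uniq)+
qed


lemma smooth_perp:
  fixes x z e :: "'a::real_normed_vector"
  assumes sm: "smooth_space TYPE('a)"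
    and fl: "bounded_linear f" and fb: "\<And>u. \<bar>f u\<bar> \<le> norm u" and fx: "f x = 1" and nx: "norm x = 1"
    and hdec': "\<And>u. f u *\<^sub>R x + h u *\<^sub>R e = u" and hl: "bounded_linear h" and hx: "h x = 0"
    and bj: "bj_orth x z"
  shows "f z = 0"
proof (rule ccontr)
  assume fz: "f z \<noteq> 0"
  interpret f: bounded_linear f by (rule fl)
  interpret h: bounded_linear h by (rule hl)
  have hz: "h z \<noteq> 0"
  proof
    assume h0: "h z = 0"
    have "f z *\<^sub>R x + h z *\<^sub>R e = z" by (rule hdec')
    hence zx: "f z *\<^sub>R x = z" using h0 by simp
    have "norm x \<le> norm (x + (- 1 / f z) *\<^sub>R z)" using bj unfolding bj_orth_def by blast
    also have "x + (- 1 / f z) *\<^sub>R z = x + (- 1 / f z) *\<^sub>R (f z *\<^sub>R x)" using zx by simp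
    also have "\<dots> = 0" using fz by simp
    finally show False using nx by simp
  qed
  define g where "g u = f u - (f z / h z) * h u" for u
  have gl: "bounded_linear g" unfolding g_def
    by (intro bounded_linear_sub fl bounded_linear_const_mult hl)
  have gx: "g x = 1" unfolding g_def using fx hx by simp
  have gz: "g z = 0" unfolding g_def using hz by simp
  have gb: "\<bar>g u\<bar> \<le> norm u" for u
  proof -
    define \<beta> where "\<beta> = h u / h z"
    define \<alpha> where "\<alpha> = f u - \<beta> * f z"
    have "\<alpha> *\<^sub>R x + \<beta> *\<^sub>R z = \<alpha> *\<^sub>R x + \<beta> *\<^sub>R (f z *\<^sub>R x + h z *\<^sub>R e)"
      by (simp only: hdec')
    also have "\<dots> = (\<alpha> + \<beta> * f z) *\<^sub>R x + (\<beta> * h z) *\<^sub>R e"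
      by (simp add: algebra_simps)
    also have "\<beta> * h z = h u" unfolding \<beta>_def using hz by simp
    also have "\<alpha> + \<beta> * f z = f u" unfolding \<alpha>_def by simp
    also have "f u *\<^sub>R x + h u *\<^sub>R e = u" by (rule hdec')
    finally have ueq: "\<alpha> *\<^sub>R x + \<beta> *\<^sub>R z = u" .
    have ga: "g u = \<alpha>" unfolding g_def \<alpha>_def \<beta>_def by simp
    have "\<bar>\<alpha>\<bar> \<le> norm (\<alpha> *\<^sub>R x + \<beta> *\<^sub>R z)"
    proof (cases "\<alpha> = 0")
      case True thus ?thesis by simp
    next
      case False
      have "\<alpha> *\<^sub>R x + \<beta> *\<^sub>R z = \<alpha> *\<^sub>R (x + (\<beta> / \<alpha>) *\<^sub>R z)"
        using False by (simp add: algebra_simps)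
      hence "norm (\<alpha> *\<^sub>R x + \<beta> *\<^sub>R z) = \<bar>\<alpha>\<bar> * norm (x + (\<beta> / \<alpha>) *\<^sub>R z)" by simp
      moreover have "norm x \<le> norm (x + (\<beta> / \<alpha>) *\<^sub>R z)" using bj unfolding bj_orth_def by blast
      ultimately show ?thesis using nx mult_left_mono[of 1 "norm (x + (\<beta> / \<alpha>) *\<^sub>R z)" "\<bar>\<alpha>\<bar>"] by simp
    qed
    thus ?thesis using ueq ga by simp
  qed
  define F where "F = Blinfun f"
  define G where "G = Blinfun g"
  have Fa: "blinfun_apply F = f" unfolding F_def by (rule bounded_linear_Blinfun_apply[OF fl])
  have Ga: "blinfun_apply G = g" unfolding G_def by (rule bounded_linear_Blinfun_apply[OF gl])
  have nF: "norm F = 1"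
  proof (rule antisym)
    show "norm F \<le> 1" by (rule norm_blinfun_bound) (auto simp: Fa fb)
    have "norm (blinfun_apply F x) \<le> norm F * norm x" by (rule norm_blinfun)
    thus "1 \<le> norm F" using Fa fx nx by simp
  qed
  have nG: "norm G = 1"
  proof (rule antisym)
    show "norm G \<le> 1" by (rule norm_blinfun_bound) (auto simp: Ga gb)
    have "norm (blinfun_apply G x) \<le> norm G * norm x" by (rule norm_blinfun)
    thus "1 \<le> norm G" using Ga gx nx by simp
  qed
  have "\<exists>!F'::'a \<Rightarrow>\<^sub>L real. norm F' = 1 \<and> blinfun_apply F' x = 1"
    using sm nx unfolding smooth_space_def by blast
  hence "F = G" using nF nG Fa Ga fx gx by metis
  hence "f z = g z" using Fa Ga by metis
  thus False using gz fz by simp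
qed

lemma exists_orth:
  fixes y :: "'b::real_inner"
  assumes "\<exists>u v :: 'b. u \<noteq> v \<and> independent {u, v}" "y \<noteq> 0"
  shows "\<exists>w. inner y w = 0 \<and> norm w = 1"
proof -
  obtain u v :: 'b where uv: "u \<noteq> v" "independent {u, v}" using assms(1) by blast
  obtain p where p: "p \<notin> span {y}"
  proof -
    have "\<not> {u, v} \<subseteq> span {y}"
    proof
      assume "{u, v} \<subseteq> span {y}"
      hence "card {u, v} \<le> card {y}"
        using real_vector.independent_span_bound[of "{y}" "{u, v}"] uv(2) by auto
      thus False using uv(1) by simp
    qed
    thus ?thesis using that by blast
  qed
  define w' where "w' = p - (inner p y / inner y y) *\<^sub>R y"
  have yy: "inner y y \<noteq> 0" using assms(2) by simp
  have "w' \<noteq> 0"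
  proof
    assume "w' = 0"
    hence "p = (inner p y / inner y y) *\<^sub>R y" unfolding w'_def by simp
    hence "p \<in> span {y}" by (metis real_vector.span_base real_vector.span_scale singletonI)
    thus False using p by simp
  qed
  have iw: "inner y w' = 0" unfolding w'_def using yy by (simp add: inner_diff_right inner_commute)
  show ?thesis
    by (rule exI[of _ "w' /\<^sub>R norm w'"]) (use iw \<open>w' \<noteq> 0\<close> in simp)
qed



theorem mainTheorem10:
  fixes T :: "'a::banach \<Rightarrow>\<^sub>L 'b::{real_inner, complete_space}"
    and x :: 'a
  assumes "dim (UNIV :: 'a set) = 2"
    and "smooth_space TYPE('a)"
    and "\<exists>u v :: 'b. u \<noteq> v \<and> independent {u, v}"
    and "dim (range (blinfun_apply T)) = 1"
    and "norm T = 1"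
    and "norm_attain T = {x, -x}"
  shows "extreme_contraction T \<longleftrightarrow> \<not> cpp x (blinfun_apply T x)"
proof -
  obtain f e h k where nx: "norm x = 1" and ny: "norm (T x) = 1"
    and Tf: "\<And>u. blinfun_apply T u = f u *\<^sub>R T x"
    and fl: "bounded_linear f" and fb: "\<And>u. \<bar>f u\<bar> \<le> norm u" and fx: "f x = 1"
    and ne: "norm e = 1" and fe: "f e = 0"
    and hdec: "\<And>u. u = f u *\<^sub>R x + h u *\<^sub>R e"
    and hl: "bounded_linear h" and kpos: "k > 0" and kb: "\<And>u. k * norm (f u, h u) \<le> norm u"
    and uniq: "\<And>w a b. w = a *\<^sub>R x + b *\<^sub>R e \<Longrightarrow> a = f w \<and> b = h w"
    by (rule prelim[OF assms(1) assms(4) assms(5) assms(6)]) (rule that)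
  interpret f: bounded_linear f by (rule fl)
  interpret h: bounded_linear h by (rule hl)
  have hdec': "f u *\<^sub>R x + h u *\<^sub>R e = u" for u by (rule hdec[symmetric])
  have hx: "h x = 0" using uniq[of x 1 0] by simp
  have he: "h e = 1" using uniq[of e 0 1] by simp
  have xe: "bj_orth x e" unfolding bj_orth_def
  proof
    fix t :: real
    have "\<bar>f (x + t *\<^sub>R e)\<bar> \<le> norm (x + t *\<^sub>R e)" by (rule fb)
    thus "norm x \<le> norm (x + t *\<^sub>R e)" using nx fx fe by (simp add: f.add f.scale)
  qed
  have nTu: "norm (T u) = \<bar>f u\<bar>" for u using Tf[of u] ny by simp
  have Tx0: "T x \<noteq> 0" using ny by auto
  show ?thesis
  proof
    assume ext: "extreme_contraction T"
    show "\<not> cpp x (T x)"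
    proof
      assume "cpp x (T x)"
      then obtain r \<mu> where r: "r > 0" and mu: "\<mu> > 0" and
        P: "\<And>z w a b. bj_orth x z \<and> norm z = 1 \<and> bj_orth (T x) w \<and> norm w = 1 \<and>
              a *\<^sub>R x + b *\<^sub>R z \<in> ball x r \<and> norm (a *\<^sub>R x + b *\<^sub>R z) = 1 \<Longrightarrow>
              norm (a *\<^sub>R T x + (b * \<mu>) *\<^sub>R w) \<le> 1"
        unfolding cpp_def by blast
      obtain w where w: "inner (T x) w = 0" "norm w = 1" using exists_orth[OF assms(3) Tx0] by blast
      have loc: "(f u)\<^sup>2 + (h u * \<mu>)\<^sup>2 \<le> 1" if u: "norm u = 1" "dist x u < r" for u
      proof -
        have "norm (f u *\<^sub>R T x + (h u * \<mu>) *\<^sub>R w) \<le> 1"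
          by (rule P[of e w "f u" "h u"]) (use xe ne inner_bj[OF w(1)] w(2) u in \<open>simp add: hdec'\<close>)
        hence "(norm (f u *\<^sub>R T x + (h u * \<mu>) *\<^sub>R w))\<^sup>2 \<le> 1"
          by (rule power_le_one[OF norm_ge_zero])
        thus ?thesis using pyth2[OF w(1) ny w(2)] by simp
      qed
      define L where "L v = fst v *\<^sub>R x + snd v *\<^sub>R e" for v :: "real \<times> real"
      have fL: "f (L v) = fst v" and hL: "h (L v) = snd v" for v
        using uniq[of "L v" "fst v" "snd v"] unfolding L_def by auto
      have Lcont: "continuous_on UNIV L" unfolding L_def by (intro continuous_intros)
      define K where "K = {v. norm (L v) = 1 \<and> r \<le> dist x (L v) \<and> r \<le> dist x (- L v)}"
      have Kc: "compact K"
      proof -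
        have "closed K" unfolding K_def
          by (intro closed_Collect_conj closed_Collect_eq closed_Collect_le continuous_intros
              continuous_on_compose2[OF continuous_on_norm_id Lcont]
              continuous_on_dist continuous_on_const Lcont continuous_on_minus) auto
        moreover have "bounded K"
        proof (rule boundedI)
          fix v assume "v \<in> K"
          hence "norm (L v) = 1" unfolding K_def by simp
          moreover have "k * norm (f (L v), h (L v)) \<le> norm (L v)" by (rule kb)
          ultimately have "k * norm v \<le> 1" by (simp add: fL hL)
          thus "norm v \<le> 1 / k" using kpos by (simp add: field_simps)
        qed
        ultimately show ?thesis by (simp add: compact_eq_bounded_closed)
      qed
      obtain m where m0: "0 \<le> m" and m1: "m < 1" and mK: "\<And>v. v \<in> K \<Longrightarrow> \<bar>fst v\<bar> \<le> m"
      proof (cases "K = {}")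
        case True thus ?thesis using that[of 0] by simp
      next
        case False
        have "continuous_on K (\<lambda>v. \<bar>fst v\<bar>)" by (intro continuous_intros)
        then obtain vm where vm: "vm \<in> K" "\<And>v. v \<in> K \<Longrightarrow> \<bar>fst v\<bar> \<le> \<bar>fst vm\<bar>"
          using continuous_attains_sup[OF Kc False] by blast
        have nL: "norm (L vm) = 1" and d1: "r \<le> dist x (L vm)" and d2: "r \<le> dist x (- L vm)"
          using vm(1) unfolding K_def by auto
        have le1: "\<bar>fst vm\<bar> \<le> 1" using fb[of "L vm"] nL fL by simp
        have "\<bar>fst vm\<bar> \<noteq> 1"
        proof
          assume a1: "\<bar>fst vm\<bar> = 1"
          have "L vm \<in> norm_attain T" unfolding norm_attain_def
            using nL nTu[of "L vm"] fL a1 assms(5) by simp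
          hence "L vm = x \<or> L vm = - x" using assms(6) by auto
          thus False using d1 d2 r by auto
        qed
        hence "\<bar>fst vm\<bar> < 1" using le1 by simp
        thus ?thesis using that[of "\<bar>fst vm\<bar>"] vm by simp
      qed
      define c where "c = min \<mu> (k * sqrt (1 - m\<^sup>2))"
      have m2: "m\<^sup>2 < 1" using m0 m1 by (simp add: power_less_one_iff abs_square_less_1)
      have cpos: "c > 0" unfolding c_def using mu kpos m2 by simp
      have cmu: "c \<le> \<mu>" unfolding c_def by simp
      have ck: "c \<le> k * sqrt (1 - m\<^sup>2)" unfolding c_def by simp
      have glob1: "(f u)\<^sup>2 + (c * h u)\<^sup>2 \<le> 1" if nu: "norm u = 1" for u
      proof -
        have cm: "(c * h u)\<^sup>2 \<le> (h u * \<mu>)\<^sup>2"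
          using cmu cpos by (simp add: power_mult_distrib mult_right_mono power_mono mult.commute)
        show ?thesis
        proof (cases "dist x u < r")
          case True thus ?thesis using loc[OF nu True] cm by linarith
        next
          case c1: False
          show ?thesis
          proof (cases "dist x (- u) < r")
            case True
            have "(f (- u))\<^sup>2 + (h (- u) * \<mu>)\<^sup>2 \<le> 1" using loc[of "- u"] nu True by simp
            thus ?thesis using cm by (simp add: f.neg h.neg)
          next
            case c2: False
            have Lu: "L (f u, h u) = u" unfolding L_def by (simp add: hdec')
            have "(f u, h u) \<in> K" unfolding K_def using Lu nu c1 c2 by simp
            hence fm: "\<bar>f u\<bar> \<le> m" using mK by force
            have "k * norm (f u, h u) \<le> 1" using kb[of u] nu by simp
            moreover have "k * \<bar>h u\<bar> \<le> k * norm (f u, h u)"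
              by (intro mult_left_mono) (use norm_snd_le[of "h u" "f u"] kpos in auto)
            ultimately have khu: "k * \<bar>h u\<bar> \<le> 1" by linarith
            have f2: "(f u)\<^sup>2 \<le> m\<^sup>2" using fm by (metis abs_ge_zero power2_abs power_mono)
            have "\<bar>c * h u\<bar> = c * \<bar>h u\<bar>" using cpos by (simp add: abs_mult)
            also have "\<dots> \<le> (k * sqrt (1 - m\<^sup>2)) * \<bar>h u\<bar>" using ck by (simp add: mult_right_mono)
            also have "\<dots> = sqrt (1 - m\<^sup>2) * (k * \<bar>h u\<bar>)" by simp
            also have "\<dots> \<le> sqrt (1 - m\<^sup>2) * 1" by (intro mult_left_mono) (use khu m2 in auto)
            finally have "\<bar>c * h u\<bar> \<le> sqrt (1 - m\<^sup>2)" by simp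
            hence "(c * h u)\<^sup>2 \<le> (sqrt (1 - m\<^sup>2))\<^sup>2"
              by (metis abs_ge_zero power2_abs power_mono)
            also have "\<dots> = 1 - m\<^sup>2" using m2 by simp
            finally show ?thesis using f2 by linarith
          qed
        qed
      qed
      have glob: "(f u)\<^sup>2 + (c * h u)\<^sup>2 \<le> (norm u)\<^sup>2" for u
      proof (cases "u = 0")
        case True thus ?thesis by (simp add: f.zero h.zero)
      next
        case False
        hence nu: "norm u > 0" by simp
        have "(f (u /\<^sub>R norm u))\<^sup>2 + (c * h (u /\<^sub>R norm u))\<^sup>2 \<le> 1" using glob1 False by simp
        hence "(f u / norm u)\<^sup>2 + (c * h u / norm u)\<^sup>2 \<le> 1" by (simp add: f.scale h.scale divide_inverse mult.commute mult.left_commute)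
        hence "((f u)\<^sup>2 + (c * h u)\<^sup>2) / (norm u)\<^sup>2 \<le> 1" by (simp add: power_divide add_divide_distrib)
        thus ?thesis using nu by (simp add: divide_le_eq)
      qed
      define S where "S = Blinfun (\<lambda>u. (c * h u) *\<^sub>R w)"
      have Sbl: "bounded_linear (\<lambda>u. (c * h u) *\<^sub>R w)"
        by (intro bounded_linear_scaleR_const bounded_linear_const_mult hl)
      have Sa: "blinfun_apply S u = (c * h u) *\<^sub>R w" for u
        unfolding S_def using bounded_linear_Blinfun_apply[OF Sbl] by simp
      have bnd: "norm (T u + (s * (c * h u)) *\<^sub>R w) \<le> norm u" if s: "\<bar>s\<bar> = 1" for u s
      proof -
        have "(norm (f u *\<^sub>R T x + (s * (c * h u)) *\<^sub>R w))\<^sup>2 = (f u)\<^sup>2 + (s * (c * h u))\<^sup>2"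
          by (rule pyth2[OF w(1) ny w(2)])
        also have "(s * (c * h u))\<^sup>2 = (c * h u)\<^sup>2" using s by (simp add: power_mult_distrib abs_square_eq_1)
        finally have "(norm (T u + (s * (c * h u)) *\<^sub>R w))\<^sup>2 \<le> (norm u)\<^sup>2"
          using glob[of u] Tf[of u] by simp
        thus ?thesis using power2_le_imp_le norm_ge_zero by blast
      qed
      have nTS1: "norm (T + S) \<le> 1"
      proof (rule norm_blinfun_bound)
        fix u
        show "norm ((T + S) u) \<le> 1 * norm u"
          using bnd[where s=1 and u=u] by (simp add: Sa plus_blinfun.rep_eq)
      qed simp
      have nTS2: "norm (T - S) \<le> 1"
      proof (rule norm_blinfun_bound)
        fix u
        show "norm ((T - S) u) \<le> 1 * norm u"
          using bnd[where s="-1" and u=u] by (simp add: Sa minus_blinfun.rep_eq)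
      qed simp
      have "S \<noteq> 0"
      proof
        assume "S = 0"
        hence "blinfun_apply S e = 0" by simp
        thus False using Sa[of e] he cpos w(2) by auto
      qed
      hence "T - S \<noteq> T + S"
      proof (intro notI)
        assume eq: "T - S = T + S"
        have "2 *\<^sub>R S = (T + S) - (T - S)" by (simp add: scaleR_2 algebra_simps)
        also have "\<dots> = 0" using eq by simp
        finally have "S = 0" by simp
        thus False using \<open>S \<noteq> 0\<close> by simp
      qed
      hence "midpoint (T - S) (T + S) \<in> open_segment (T - S) (T + S)" by simp
      moreover have "midpoint (T - S) (T + S) = T"
      proof -
        have "(T - S) + (T + S) = 2 *\<^sub>R T" by (simp add: scaleR_2)
        thus ?thesis unfolding midpoint_def by simp
      qed
      ultimately have "T \<in> open_segment (T - S) (T + S)" by simp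
      moreover have "T - S \<in> cball 0 1" "T + S \<in> cball 0 1" using nTS1 nTS2 by auto
      ultimately show False using ext unfolding extreme_contraction_def extreme_point_of_def by blast
    qed
  next
    assume ncpp: "\<not> cpp x (T x)"
    have Tin: "T \<in> cball 0 1" using assms(5) by simp
    show "extreme_contraction T"
      unfolding extreme_contraction_def extreme_point_of_def
    proof (intro conjI ballI assms(5) Tin)
      fix A B assume A: "A \<in> cball (0::'a \<Rightarrow>\<^sub>L 'b) 1" and B: "B \<in> cball (0::'a \<Rightarrow>\<^sub>L 'b) 1"
      show "T \<notin> open_segment A B"
      proof
        assume "T \<in> open_segment A B"
        then obtain t where AB: "A \<noteq> B" and t0: "0 < t" and t1: "t < 1"
          and Teq: "T = (1 - t) *\<^sub>R A + t *\<^sub>R B" by (auto simp: in_segment)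
        define D where "D = B - A"
        define s where "s = min t (1 - t)"
        have s0: "0 < s" unfolding s_def using t0 t1 by simp
        define S where "S = s *\<^sub>R D"
        have BT: "B - T = (1 - t) *\<^sub>R D" unfolding D_def Teq by (simp add: algebra_simps)
        have AT: "A - T = (- t) *\<^sub>R D" unfolding D_def Teq by (simp add: algebra_simps)
        define l where "l = s / (1 - t)"
        have l0: "0 \<le> l" "l \<le> 1" unfolding l_def s_def using t0 t1 by (auto simp: field_simps)
        have "T + S = (1 - l) *\<^sub>R T + l *\<^sub>R B"
        proof -
          have "(1 - l) *\<^sub>R T + l *\<^sub>R B = T + l *\<^sub>R (B - T)" by (simp add: algebra_simps)
          also have "\<dots> = T + (l * (1 - t)) *\<^sub>R D" by (simp add: BT)
          also have "l * (1 - t) = s" unfolding l_def using t1 by simp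
          finally show ?thesis unfolding S_def by simp
        qed
        hence TS1: "T + S \<in> cball 0 1"
          using convexD[OF convex_cball Tin B, of "1 - l" l] l0 by simp
        define q where "q = s / t"
        have q0: "0 \<le> q" "q \<le> 1" unfolding q_def s_def using t0 t1 by (auto simp: field_simps)
        have "T - S = (1 - q) *\<^sub>R T + q *\<^sub>R A"
        proof -
          have "(1 - q) *\<^sub>R T + q *\<^sub>R A = T + q *\<^sub>R (A - T)" by (simp add: algebra_simps)
          also have "\<dots> = T + (q * (- t)) *\<^sub>R D" by (simp add: AT)
          also have "q * (- t) = - s" unfolding q_def using t0 by simp
          finally show ?thesis unfolding S_def by simp
        qed
        hence TS2: "T - S \<in> cball 0 1"
          using convexD[OF convex_cball Tin A, of "1 - q" q] q0 by simp
        have bnd: "(norm (T u))\<^sup>2 + (norm (S u))\<^sup>2 \<le> (norm u)\<^sup>2" for u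
        proof (rule paral)
          have "norm ((T + S) u) \<le> norm (T + S) * norm u" by (rule norm_blinfun)
          also have "\<dots> \<le> 1 * norm u" using TS1 by (intro mult_right_mono) auto
          finally show "norm (T u + S u) \<le> norm u" by (simp add: plus_blinfun.rep_eq)
          have "norm ((T - S) u) \<le> norm (T - S) * norm u" by (rule norm_blinfun)
          also have "\<dots> \<le> 1 * norm u" using TS2 by (intro mult_right_mono) auto
          finally show "norm (T u - S u) \<le> norm u" by (simp add: minus_blinfun.rep_eq)
        qed
        have Sx: "S x = 0" using bnd[of x] nTu[of x] fx nx by simp
        have Sdec: "S u = h u *\<^sub>R S e" for u
        proof -
          have "S u = S (f u *\<^sub>R x + h u *\<^sub>R e)" by (simp only: hdec')
          also have "\<dots> = h u *\<^sub>R S e" by (simp add: blinfun.add_right blinfun.scaleR_right Sx)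
          finally show ?thesis .
        qed
        have Se: "S e \<noteq> 0"
        proof
          assume "S e = 0"
          have "S = 0"
          proof (rule blinfun_eqI)
            fix u show "S u = blinfun_apply 0 u" using Sdec[of u] \<open>S e = 0\<close> by simp
          qed
          hence "D = 0" unfolding S_def using s0 by simp
          thus False using AB unfolding D_def by simp
        qed
        define \<mu> where "\<mu> = norm (S e)"
        have mu: "\<mu> > 0" unfolding \<mu>_def using Se by simp
        have key: "\<forall>z w. \<forall>a b::real. (bj_orth x z \<and> norm z = 1 \<and> bj_orth (T x) w \<and> norm w = 1 \<and>
            a *\<^sub>R x + b *\<^sub>R z \<in> ball x 1 \<and> norm (a *\<^sub>R x + b *\<^sub>R z) = 1) \<longrightarrow>
            norm (a *\<^sub>R T x + (b * \<mu>) *\<^sub>R w) \<le> 1"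
        proof (intro allI impI)
          fix z w a b
          assume H: "bj_orth x z \<and> norm z = 1 \<and> bj_orth (T x) w \<and> norm w = 1 \<and>
            a *\<^sub>R x + b *\<^sub>R z \<in> ball x 1 \<and> norm (a *\<^sub>R x + b *\<^sub>R z) = 1"
          have fz: "f z = 0"
            by (rule smooth_perp[OF assms(2) fl fb fx nx hdec' hl hx]) (use H in blast)
          have "f z *\<^sub>R x + h z *\<^sub>R e = z" by (rule hdec')
          hence ze: "h z *\<^sub>R e = z" using fz by simp
          have "norm (h z *\<^sub>R e) = \<bar>h z\<bar>" using ne by simp
          hence hz1: "\<bar>h z\<bar> = 1" using ze H by simp
          define u where "u = a *\<^sub>R x + b *\<^sub>R z"
          have fu: "f u = a" unfolding u_def using fx fz by (simp add: f.add f.scale)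
          have hu: "h u = b * h z" unfolding u_def by (simp add: h.add h.scale hx)
          have Su: "S u = (b * h z) *\<^sub>R S e" using Sdec[of u] hu by simp
          have nSu: "norm (S u) = \<bar>b\<bar> * \<mu>" unfolding Su \<mu>_def using hz1 by (simp add: abs_mult)
          have nu: "norm u = 1" unfolding u_def using H by simp
          have "a\<^sup>2 + (b * \<mu>)\<^sup>2 \<le> 1"
            using bnd[of u] nTu[of u] fu nSu nu by (simp add: power_mult_distrib)
          moreover have "(norm (a *\<^sub>R T x + (b * \<mu>) *\<^sub>R w))\<^sup>2 = a\<^sup>2 + (b * \<mu>)\<^sup>2"
            by (rule pyth2) (use H ny bj_inner in auto)
          ultimately have "(norm (a *\<^sub>R T x + (b * \<mu>) *\<^sub>R w))\<^sup>2 \<le> 1\<^sup>2" by simp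
          thus "norm (a *\<^sub>R T x + (b * \<mu>) *\<^sub>R w) \<le> 1" using power2_le_imp_le zero_le_one by blast
        qed
        have "cpp x (T x)" unfolding cpp_def using nx ny mu zero_less_one key by blast
        thus False using ncpp by simp
      qed
    qed
  qed
qed


end
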